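(* Let $L$ be a finite lattice and $\varphi\in M_1(L)$. For $g\in R(\mathcal L)$ define $$B_\varphi(g)=\min\{\Phi(g):\Phi\in M_\infty(\mathcal L),\ \Pi(\Phi)=\varphi\},\qquad S^\varphi(g)=\max\Big\{\sum_{x\in L}r_x\varphi(x): (r_x)_{x\in L}\in\mathbb R^L,\ \sum_{x\in V}r_x\le g(V)\ \text{for all } V\in\mathcal L\Big\}.$$ Then $B_\varphi(g)=S^\varphi(g)$ for every $g\in R(\mathcal L)$.
   Context: $L$ is a finite lattice. $\mathcal L$ is the set of nonempty up-sets of $L$ (subsets $U$ with $x\in U,\ x\le y\Rightarrow y\in U$), ordered by $U\preceq V$ iff $U\supseteq V$; it is a distributive lattice with meet given by union. $R(\mathcal L)$ denotes real-valued functions on $\mathcal L$. $M_1(L)$ is the set of nonnegative monotone functions on $L$; $M_\infty(\mathcal L)$ is the set of nonnegative completely monotone functions on $(\mathcal L,\preceq)$, where completeness monotonicity means all successive differences $\nabla_{U_1,\dots,U_n}\Phi\ge0$, with $\nabla_U\Phi(W)=\Phi(W)-\Phi(W\wedge U)$ iterated. For $a\in L$, $\langle a\rangle^*=\{x: x\ge a\}$, and $\Pi(\Phi)(x)=\Phi(\langle a\rangle^* )|_{a=x}$, i.e. $\Pi(\Phi)(x)=\Phi(\langle x\rangle^* )$. For $\Phi\in M_\infty(\mathcal L)$ with Möbius inverse $F$ (the unique $F$ with $\Phi(U)=\sum_{V\preceq U}F(V)$, which is nonnegative), $\Phi(g)=\sum_{V\in\mathcal L}F(V)g(V)$. *)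

theory Defs
  imports Complex_Main
begin

text \<open>The set of nonempty up-sets of the finite lattice (the carrier of the
 lattice \<open>\<L>\<close>; its order \<open>U \<preceq> V\<close> is \<open>U \<supseteq> V\<close> and its meet is union).\<close>
definition upsets :: "('a::{finite,lattice}) set set" where
  "upsets = {U. U \<noteq> {} \<and> (\<forall>x y. x \<in> U \<and> x \<le> y \<longrightarrow> y \<in> U)}"

definition principal_up :: "'a::{finite,lattice} \<Rightarrow> 'a set" where
  "principal_up a = {x. a \<le> x}"

definition M1 :: "('a::{finite,lattice} \<Rightarrow> real) set" where
  "M1 = {\<phi>. (\<forall>x. 0 \<le> \<phi> x) \<and> (\<forall>x y. x \<le> y \<longrightarrow> \<phi> x \<le> \<phi> y)}"

text \<open>Difference operator \<open>\<nabla>_U \<Phi>(W) = \<Phi>(W) - \<Phi>(W \<and> U)\<close>, meet in \<open>\<L>\<close> being union.\<close>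
definition nabla :: "'a set \<Rightarrow> ('a set \<Rightarrow> real) \<Rightarrow> 'a set \<Rightarrow> real" where
  "nabla U \<Phi> W = \<Phi> W - \<Phi> (W \<union> U)"

definition nabla_iter :: "'a set list \<Rightarrow> ('a set \<Rightarrow> real) \<Rightarrow> 'a set \<Rightarrow> real" where
  "nabla_iter Us \<Phi> = foldr nabla Us \<Phi>"

text \<open>\<open>M_\<infinity>(\<L>)\<close>: nonnegative completely monotone functions on \<open>\<L>\<close>
 (values outside \<open>\<L>\<close> are irrelevant).\<close>
definition Minf :: "('a::{finite,lattice} set \<Rightarrow> real) set" where
  "Minf = {\<Phi>. (\<forall>W\<in>upsets. 0 \<le> \<Phi> W) \<and>
     (\<forall>Us W. set Us \<subseteq> upsets \<longrightarrow> Us \<noteq> [] \<longrightarrow> W \<in> upsets \<longrightarrow> 0 \<le> nabla_iter Us \<Phi> W)}"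

definition Pi_proj :: "('a::{finite,lattice} set \<Rightarrow> real) \<Rightarrow> 'a \<Rightarrow> real" where
  "Pi_proj \<Phi> x = \<Phi> (principal_up x)"

definition moebius :: "('a::{finite,lattice} set \<Rightarrow> real) \<Rightarrow> 'a set \<Rightarrow> real" where
  "moebius \<Phi> = (THE F. (\<forall>U\<in>upsets. \<Phi> U = (\<Sum>V\<in>{V\<in>upsets. U \<subseteq> V}. F V))
                        \<and> (\<forall>U. U \<notin> upsets \<longrightarrow> F U = 0))"

definition Phi_apply :: "('a::{finite,lattice} set \<Rightarrow> real) \<Rightarrow> ('a set \<Rightarrow> real) \<Rightarrow> real" where
  "Phi_apply \<Phi> g = (\<Sum>V\<in>upsets. moebius \<Phi> V * g V)"

definition B_values :: "('a::{finite,lattice} \<Rightarrow> real) \<Rightarrow> ('a set \<Rightarrow> real) \<Rightarrow> real set" where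
  "B_values \<phi> g = {Phi_apply \<Phi> g | \<Phi>. \<Phi> \<in> Minf \<and> Pi_proj \<Phi> = \<phi>}"

definition S_values :: "('a::{finite,lattice} \<Rightarrow> real) \<Rightarrow> ('a set \<Rightarrow> real) \<Rightarrow> real set" where
  "S_values \<phi> g = {(\<Sum>x\<in>UNIV. r x * \<phi> x) | r. \<forall>V\<in>upsets. (\<Sum>x\<in>V. r x) \<le> g V}"

end

theory Submission
  imports Defs "HOL-Analysis.Analysis"
begin


lemma upsetsD: "U \<in> upsets \<Longrightarrow> x \<in> U \<Longrightarrow> x \<le> y \<Longrightarrow> y \<in> U"
  by (auto simp: upsets_def)

lemma upsets_ne: "U \<in> upsets \<Longrightarrow> U \<noteq> {}"
  by (auto simp: upsets_def)

lemma upsets_Un: "U \<in> upsets \<Longrightarrow> W \<in> upsets \<Longrightarrow> U \<union> W \<in> upsets"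
  by (auto simp: upsets_def)

lemma principal_up_upsets: "principal_up a \<in> upsets"
  by (auto simp: upsets_def principal_up_def intro: order_trans)

lemma principal_up_sub: "V \<in> upsets \<Longrightarrow> principal_up a \<subseteq> V \<longleftrightarrow> a \<in> V"
  by (auto simp: principal_up_def upsets_def)

lemma UNIV_upsets: "(UNIV::'a::{finite,lattice} set) \<in> upsets"
  by (auto simp: upsets_def)

definition isMob :: "('a::{finite,lattice} set \<Rightarrow> real) \<Rightarrow> ('a set \<Rightarrow> real) \<Rightarrow> bool" where
  "isMob \<Phi> F \<longleftrightarrow> (\<forall>U\<in>upsets. \<Phi> U = (\<Sum>V\<in>{V\<in>upsets. U \<subseteq> V}. F V))
                        \<and> (\<forall>U. U \<notin> upsets \<longrightarrow> F U = 0)"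

function mob :: "('a::{finite,lattice} set \<Rightarrow> real) \<Rightarrow> 'a set \<Rightarrow> real" where
  "mob \<Phi> U = (if U \<in> upsets then \<Phi> U - (\<Sum>V\<in>{V\<in>upsets. U \<subset> V}. mob \<Phi> V) else 0)"
  by auto
termination
  by (relation "Wellfounded.measure (\<lambda>(\<Phi>,U). card (UNIV - U))")
     (auto intro!: psubset_card_mono)

declare mob.simps[simp del]

lemma mob_isMob: "isMob \<Phi> (mob \<Phi>)"
  unfolding isMob_def
proof (intro conjI ballI allI impI)
  fix U :: "'a set" assume U: "U \<in> upsets"
  have "{V\<in>upsets. U \<subseteq> V} = insert U {V\<in>upsets. U \<subset> V}" using U by auto
  then show "\<Phi> U = (\<Sum>V\<in>{V\<in>upsets. U \<subseteq> V}. mob \<Phi> V)"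
    using U by (simp add: mob.simps[of \<Phi> U])
next
  fix U :: "'a set" assume "U \<notin> upsets" then show "mob \<Phi> U = 0" by (simp add: mob.simps)
qed

lemma isMob_unique:
  assumes "isMob \<Phi> F" "isMob \<Phi> G"
  shows "F = G"
proof
  fix U :: "'a set"
  show "F U = G U"
  proof (induction "card (UNIV - U)" arbitrary: U rule: less_induct)
    case less
    show ?case
    proof (cases "U \<in> upsets")
      case False then show ?thesis using assms by (auto simp: isMob_def)
    next
      case True
      have IH: "F V = G V" if "V \<in> {V\<in>upsets. U \<subset> V}" for V
        using that by (intro less) (auto intro!: psubset_card_mono)
      have e: "{V\<in>upsets. U \<subseteq> V} = insert U {V\<in>upsets. U \<subset> V}" using True by auto
      have "(\<Sum>V\<in>{V\<in>upsets. U \<subseteq> V}. F V) = (\<Sum>V\<in>{V\<in>upsets. U \<subseteq> V}. G V)"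
        using assms True by (auto simp: isMob_def)
      then have "F U + (\<Sum>V\<in>{V\<in>upsets. U \<subset> V}. F V) = G U + (\<Sum>V\<in>{V\<in>upsets. U \<subset> V}. G V)"
        unfolding e by simp
      moreover have "(\<Sum>V\<in>{V\<in>upsets. U \<subset> V}. F V) = (\<Sum>V\<in>{V\<in>upsets. U \<subset> V}. G V)"
        using IH by (rule sum.cong[OF refl])
      ultimately show ?thesis by simp
    qed
  qed
qed

lemma moebius_eq: "isMob \<Phi> F \<Longrightarrow> Defs.moebius \<Phi> = F"
  unfolding Defs.moebius_def using isMob_unique
  by (intro the_equality) (auto simp: isMob_def[symmetric])

lemma moebius_isMob: "isMob \<Phi> (Defs.moebius \<Phi>)"
  by (metis moebius_eq[OF mob_isMob] mob_isMob)

lemma nabla_iter_formula: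
  assumes "isMob \<Phi> F" "set Us \<subseteq> upsets" "W \<in> upsets"
  shows "nabla_iter Us \<Phi> W = (\<Sum>V\<in>{V\<in>upsets. W \<subseteq> V \<and> (\<forall>U\<in>set Us. \<not> U \<subseteq> V)}. F V)"
  using assms(2,3)
proof (induction Us arbitrary: W)
  case Nil
  then show ?case using assms(1) by (simp add: nabla_iter_def isMob_def)
next
  case (Cons U Us)
  let ?P = "\<lambda>V. \<forall>U\<in>set Us. \<not> U \<subseteq> V"
  have U: "U \<in> upsets" and Us: "set Us \<subseteq> upsets" using Cons.prems by auto
  have WU: "W \<union> U \<in> upsets" using upsets_Un Cons.prems U by blast
  have "nabla_iter (U # Us) \<Phi> W = nabla_iter Us \<Phi> W - nabla_iter Us \<Phi> (W \<union> U)"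
    by (simp add: nabla_iter_def nabla_def)
  also have "\<dots> = (\<Sum>V\<in>{V\<in>upsets. W \<subseteq> V \<and> ?P V}. F V) - (\<Sum>V\<in>{V\<in>upsets. W \<union> U \<subseteq> V \<and> ?P V}. F V)"
    using Cons.IH[OF Us Cons.prems(2)] Cons.IH[OF Us WU] by simp
  also have "(\<Sum>V\<in>{V\<in>upsets. W \<subseteq> V \<and> ?P V}. F V) =
     (\<Sum>V\<in>{V\<in>upsets. W \<subseteq> V \<and> ?P V \<and> \<not> U \<subseteq> V}. F V) + (\<Sum>V\<in>{V\<in>upsets. W \<union> U \<subseteq> V \<and> ?P V}. F V)"
    by (subst sum.union_disjoint[symmetric]) (auto intro!: sum.cong)
  finally show ?case by (simp add: conj_commute conj_left_commute)
qed


lemma moebius_nonneg: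
  assumes "\<Phi> \<in> Minf" "V \<in> upsets"
  shows "0 \<le> Defs.moebius \<Phi> V"
proof -
  obtain xs where xs: "set xs = - V" using finite_list[of "- V"] by auto
  define Us where "Us = map principal_up xs"
  have Us: "set Us \<subseteq> upsets" by (auto simp: Us_def principal_up_upsets)
  have S: "{V'\<in>upsets. V \<subseteq> V' \<and> (\<forall>U\<in>set Us. \<not> U \<subseteq> V')} = {V}"
  proof (intro equalityI subsetI)
    fix V' assume V': "V' \<in> {V'\<in>upsets. V \<subseteq> V' \<and> (\<forall>U\<in>set Us. \<not> U \<subseteq> V')}"
    have "x \<notin> V'" if "x \<notin> V" for x
    proof -
      have "principal_up x \<in> set Us" using that xs unfolding Us_def by simp
      then have "\<not> principal_up x \<subseteq> V'" using V' by blast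
      then show ?thesis using V' principal_up_sub[of V' x] by simp
    qed
    then show "V' \<in> {V}" using V' by blast
  next
    fix V' assume "V' \<in> {V}"
    then have [simp]: "V' = V" by simp
    have "\<not> U \<subseteq> V" if "U \<in> set Us" for U
    proof -
      obtain x where "x \<in> set xs" "U = principal_up x" using \<open>U \<in> set Us\<close> unfolding Us_def by auto
      then show ?thesis using xs principal_up_sub[OF assms(2), of x] by simp
    qed
    then show "V' \<in> {V'\<in>upsets. V \<subseteq> V' \<and> (\<forall>U\<in>set Us. \<not> U \<subseteq> V')}"
      using assms(2) by simp
  qed
  have "nabla_iter Us \<Phi> V = Defs.moebius \<Phi> V"
    using nabla_iter_formula[OF moebius_isMob Us assms(2)] S by simp
  moreover have "0 \<le> nabla_iter Us \<Phi> V"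
  proof (cases "Us = []")
    case True 
    have "0 \<le> \<Phi> V" using assms unfolding Minf_def by blast
    then show ?thesis using True by (simp add: nabla_iter_def)
  next
    case False then show ?thesis using assms Us unfolding Minf_def by blast
  qed
  ultimately show ?thesis by simp
qed

lemma Pi_proj_formula:
  assumes "isMob \<Phi> F"
  shows "Pi_proj \<Phi> x = (\<Sum>V\<in>{V\<in>upsets. x \<in> V}. F V)"
proof -
  have "{V\<in>upsets. principal_up x \<subseteq> V} = {V\<in>upsets. x \<in> V}"
    using principal_up_sub by blast
  moreover have "\<Phi> (principal_up x) = (\<Sum>V\<in>{V\<in>upsets. principal_up x \<subseteq> V}. F V)"
    using assms principal_up_upsets unfolding isMob_def by blast
  ultimately show ?thesis by (simp add: Pi_proj_def)
qed

definition PhiF :: "('a::{finite,lattice} set \<Rightarrow> real) \<Rightarrow> 'a set \<Rightarrow> real" where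
  "PhiF F U = (\<Sum>V\<in>{V\<in>upsets. U \<subseteq> V}. F V)"

definition Pset :: "('a::{finite,lattice} \<Rightarrow> real) \<Rightarrow> ('a set \<Rightarrow> real) set" where
  "Pset \<phi> = {F. (\<forall>V. V \<notin> upsets \<longrightarrow> F V = 0) \<and> (\<forall>V\<in>upsets. 0 \<le> F V)
       \<and> (\<forall>x. (\<Sum>V\<in>{V\<in>upsets. x \<in> V}. F V) = \<phi> x)}"

definition val :: "('a::{finite,lattice} set \<Rightarrow> real) \<Rightarrow> ('a set \<Rightarrow> real) \<Rightarrow> real" where
  "val g F = (\<Sum>V\<in>upsets. F V * g V)"

lemma PhiF_isMob: "(\<forall>V. V \<notin> upsets \<longrightarrow> F V = 0) \<Longrightarrow> isMob (PhiF F) F"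
  by (simp add: isMob_def PhiF_def)

lemma PhiF_Minf:
  assumes "\<forall>V. V \<notin> upsets \<longrightarrow> F V = 0" "\<forall>V\<in>upsets. 0 \<le> F V"
  shows "PhiF F \<in> Minf"
  unfolding Minf_def
proof (intro CollectI conjI ballI allI impI)
  fix W :: "'a set" assume "W \<in> upsets"
  then show "0 \<le> PhiF F W" using assms by (auto simp: PhiF_def intro!: sum_nonneg)
next
  fix Us :: "'a set list" and W :: "'a set" assume "set Us \<subseteq> upsets" "W \<in> upsets"
  then show "0 \<le> nabla_iter Us (PhiF F) W"
    using nabla_iter_formula[OF PhiF_isMob[OF assms(1)]] assms(2)
    by (auto intro!: sum_nonneg)
qed

lemma B_char: "B_values \<phi> g = val g ` Pset \<phi>"
proof
  show "B_values \<phi> g \<subseteq> val g ` Pset \<phi>"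
  proof
    fix b assume "b \<in> B_values \<phi> g"
    then obtain \<Phi> where P: "\<Phi> \<in> Minf" "Pi_proj \<Phi> = \<phi>" and b: "b = Phi_apply \<Phi> g"
      by (auto simp: B_values_def)
    have "Defs.moebius \<Phi> \<in> Pset \<phi>"
      using moebius_isMob[of \<Phi>] moebius_nonneg[OF P(1)] Pi_proj_formula[OF moebius_isMob, of \<Phi>] P(2)
      by (auto simp: Pset_def isMob_def)
    then show "b \<in> val g ` Pset \<phi>" using b by (auto simp: val_def Phi_apply_def)
  qed
next
  show "val g ` Pset \<phi> \<subseteq> B_values \<phi> g"
  proof
    fix b assume "b \<in> val g ` Pset \<phi>"
    then obtain F where F: "F \<in> Pset \<phi>" and b: "b = val g F" by auto
    have F0: "\<forall>V. V \<notin> upsets \<longrightarrow> F V = 0" "\<forall>V\<in>upsets. 0 \<le> F V" using F by (auto simp: Pset_def)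
    have m: "Defs.moebius (PhiF F) = F" using moebius_eq[OF PhiF_isMob[OF F0(1)]] .
    have "Pi_proj (PhiF F) = \<phi>"
      using Pi_proj_formula[OF PhiF_isMob[OF F0(1)]] F by (auto simp: Pset_def)
    then show "b \<in> B_values \<phi> g" using PhiF_Minf[OF F0] m b
      unfolding B_values_def val_def Phi_apply_def by (intro CollectI exI[of _ "PhiF F"]) auto
  qed
qed



lemma cone_hull_finite:
  fixes v :: "'i \<Rightarrow> 'b::real_vector"
  assumes "finite I"
  shows "convex_cone hull (v ` I) = {\<Sum>i\<in>I. l i *\<^sub>R v i | l. \<forall>i\<in>I. 0 \<le> l i}"
    (is "_ = ?C")
proof
  have cc: "convex_cone ?C"
    unfolding convex_cone_iff
  proof (intro conjI ballI allI impI)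
    show "0 \<in> ?C" by (intro CollectI exI[of _ "\<lambda>_. 0"]) simp
  next
    fix x y assume "x \<in> ?C" "y \<in> ?C"
    then obtain l1 l2 where "x = (\<Sum>i\<in>I. l1 i *\<^sub>R v i)" "\<forall>i\<in>I. 0 \<le> l1 i"
        "y = (\<Sum>i\<in>I. l2 i *\<^sub>R v i)" "\<forall>i\<in>I. 0 \<le> l2 i" by auto
    then have h: "x + y = (\<Sum>i\<in>I. (l1 i + l2 i) *\<^sub>R v i) \<and> (\<forall>i\<in>I. 0 \<le> l1 i + l2 i)"
      by (simp add: scaleR_add_left sum.distrib)
    show "x + y \<in> ?C" unfolding mem_Collect_eq by (rule exI[of _ "\<lambda>i. l1 i + l2 i"], rule h)
  next
    fix x and c :: real assume "x \<in> ?C" "0 \<le> c"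
    then obtain l1 where "x = (\<Sum>i\<in>I. l1 i *\<^sub>R v i)" "\<forall>i\<in>I. 0 \<le> l1 i" by auto
    then have h: "c *\<^sub>R x = (\<Sum>i\<in>I. (c * l1 i) *\<^sub>R v i) \<and> (\<forall>i\<in>I. 0 \<le> c * l1 i)"
      using \<open>0 \<le> c\<close> by (simp add: scaleR_sum_right)
    show "c *\<^sub>R x \<in> ?C" unfolding mem_Collect_eq by (rule exI[of _ "\<lambda>i. c * l1 i"], rule h)
  qed
  have sub: "v ` I \<subseteq> ?C"
  proof
    fix x assume "x \<in> v ` I"
    then obtain j where j: "j \<in> I" "x = v j" by auto
    have "(\<Sum>i\<in>I. (if i = j then 1 else 0) *\<^sub>R v i) = (\<Sum>i\<in>I. if i = j then v i else 0)"
      by (rule sum.cong) auto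
    also have "\<dots> = v j" using j assms by simp
    finally have h: "x = (\<Sum>i\<in>I. (if i = j then 1 else 0) *\<^sub>R v i) \<and> (\<forall>i\<in>I. 0 \<le> (if i = j then 1 else (0::real)))"
      using j by auto
    show "x \<in> ?C" unfolding mem_Collect_eq by (rule exI[of _ "\<lambda>i. if i = j then 1 else 0"], rule h)
  qed
  show "convex_cone hull (v ` I) \<subseteq> ?C" by (rule hull_minimal[where S=convex_cone, OF sub cc])
next
  show "?C \<subseteq> convex_cone hull (v ` I)"
  proof
    fix x assume "x \<in> ?C"
    then obtain l where x: "x = (\<Sum>i\<in>I. l i *\<^sub>R v i)" and l: "\<forall>i\<in>I. 0 \<le> l i" by auto
    have "J \<subseteq> I \<Longrightarrow> (\<Sum>i\<in>J. l i *\<^sub>R v i) \<in> convex_cone hull (v ` I)" for J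
    proof (induction J rule: infinite_finite_induct)
      case (infinite J) then show ?case by (simp add: convex_cone_hull_contains_0)
    next
      case empty then show ?case by (simp add: convex_cone_hull_contains_0)
    next
      case (insert i J)
      have "l i *\<^sub>R v i \<in> convex_cone hull (v ` I)"
      proof (rule convex_cone_hull_mul)
        show "v i \<in> convex_cone hull (v ` I)" using insert by (intro hull_inc) auto
        show "0 \<le> l i" using insert l by auto
      qed
      then show ?case using insert by (simp add: convex_cone_hull_add)
    qed
    then show "x \<in> convex_cone hull (v ` I)" using x by simp
  qed
qed

lemma weak_duality:
  assumes F: "F \<in> Pset \<phi>" and r: "\<forall>V\<in>upsets. (\<Sum>x\<in>V. r x) \<le> g V"
  shows "(\<Sum>x\<in>UNIV. r x * \<phi> x) \<le> val g F"
proof -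
  have "(\<Sum>x\<in>UNIV. r x * \<phi> x) = (\<Sum>x\<in>UNIV. r x * (\<Sum>V\<in>upsets. if x \<in> V then F V else 0))"
    using F by (simp add: Pset_def sum.inter_filter[symmetric])
  also have "\<dots> = (\<Sum>x\<in>UNIV. \<Sum>V\<in>upsets. if x \<in> V then r x * F V else 0)"
    by (simp add: sum_distrib_left if_distrib cong: if_cong)
  also have "\<dots> = (\<Sum>V\<in>upsets. \<Sum>x\<in>UNIV. if x \<in> V then r x * F V else 0)"
    by (rule sum.swap)
  also have "\<dots> = (\<Sum>V\<in>upsets. F V * (\<Sum>x\<in>V. r x))"
    by (simp add: sum.inter_filter[symmetric] sum_distrib_left mult.commute)
  also have "\<dots> \<le> (\<Sum>V\<in>upsets. F V * g V)"
    using F r by (intro sum_mono mult_left_mono) (auto simp: Pset_def)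
  finally show ?thesis by (simp add: val_def)
qed

lemma feasible:
  assumes "\<forall>x. 0 \<le> \<phi> x" "\<forall>x y. x \<le> y \<longrightarrow> \<phi> x \<le> \<phi> y"
  shows "\<exists>F. F \<in> Pset \<phi>"
  using assms
proof (induction "card {x. 0 < \<phi> x}" arbitrary: \<phi> rule: less_induct)
  case less
  show ?case
  proof (cases "{x. 0 < \<phi> x} = {}")
    case True
    have "\<phi> x = 0" for x
    proof -
      have "\<not> 0 < \<phi> x" using True by blast
      moreover have "0 \<le> \<phi> x" using less.prems by blast
      ultimately show ?thesis by linarith
    qed
    then show ?thesis by (intro exI[of _ "\<lambda>_. 0"]) (auto simp: Pset_def)
  next
    case False
    define V0 where "V0 = {x. 0 < \<phi> x}"
    define c where "c = Min (\<phi> ` V0)"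
    have V0ne: "V0 \<noteq> {}" using False V0_def by simp
    have cin: "c \<in> \<phi> ` V0" unfolding c_def using V0ne by (intro Min_in) auto
    then obtain x0 where x0: "x0 \<in> V0" "\<phi> x0 = c" by auto
    have cpos: "0 < c" using x0 V0_def by auto
    have cle: "c \<le> \<phi> x" if "x \<in> V0" for x unfolding c_def using that by (intro Min_le) auto
    have V0up: "V0 \<in> upsets" unfolding upsets_def
    proof (intro CollectI conjI allI impI)
      show "V0 \<noteq> {}" by (rule V0ne)
      fix x y assume "x \<in> V0 \<and> x \<le> y"
      then have "0 < \<phi> x" "\<phi> x \<le> \<phi> y" using less.prems(2) by (auto simp: V0_def)
      then show "y \<in> V0" by (simp add: V0_def)
    qed
    define \<psi> where "\<psi> x = (if x \<in> V0 then \<phi> x - c else \<phi> x)" for x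
    have p1: "\<forall>x. 0 \<le> \<psi> x"
    proof
      fix x show "0 \<le> \<psi> x"
        using cle[of x] less.prems(1) unfolding \<psi>_def by (cases "x \<in> V0") simp_all
    qed
    have p2: "\<forall>x y. x \<le> y \<longrightarrow> \<psi> x \<le> \<psi> y"
    proof (intro allI impI)
      fix x y :: 'a assume "x \<le> y"
      then have "\<phi> x \<le> \<phi> y" using less.prems by auto
      moreover have "x \<in> V0 \<Longrightarrow> y \<in> V0" using \<open>\<phi> x \<le> \<phi> y\<close> by (auto simp: V0_def)
      moreover have "x \<notin> V0 \<Longrightarrow> \<phi> x = 0"
      proof -
        assume "x \<notin> V0" then have "\<not> 0 < \<phi> x" by (simp add: V0_def)
        moreover have "0 \<le> \<phi> x" using less.prems(1) by blast
        ultimately show ?thesis by linarith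
      qed
      moreover have "y \<in> V0 \<Longrightarrow> c \<le> \<phi> y" by (rule cle)
      ultimately show "\<psi> x \<le> \<psi> y" unfolding \<psi>_def
        by (cases "x \<in> V0"; cases "y \<in> V0") simp_all
    qed
    have sub1: "{x. 0 < \<psi> x} \<subseteq> V0"
    proof
      fix x assume "x \<in> {x. 0 < \<psi> x}"
      then have "0 < \<psi> x" by simp
      then show "x \<in> V0" unfolding \<psi>_def by (cases "x \<in> V0") (simp_all add: V0_def)
    qed
    have "x0 \<notin> {x. 0 < \<psi> x}" using x0 by (simp add: \<psi>_def)
    then have sub: "{x. 0 < \<psi> x} \<subset> V0" using sub1 x0(1) by blast
    have cardlt: "card {x. 0 < \<psi> x} < card {x. 0 < \<phi> x}"
      using psubset_card_mono[OF _ sub] V0_def by simp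
    obtain F' where F': "F' \<in> Pset \<psi>" using less.hyps[OF cardlt p1 p2] by (elim exE)
    define F where "F V = F' V + (if V = V0 then c else 0)" for V
    have "F \<in> Pset \<phi>"
      unfolding Pset_def
    proof (intro CollectI conjI allI impI ballI)
      fix V :: "'a set" assume "V \<notin> upsets" then show "F V = 0"
        using F' V0up by (auto simp: F_def Pset_def)
    next
      fix V :: "'a set" assume "V \<in> upsets" then show "0 \<le> F V"
        using F' cpos by (auto simp: F_def Pset_def)
    next
      fix x
      have "(\<Sum>V\<in>{V\<in>upsets. x \<in> V}. F V) = \<psi> x + (if x \<in> V0 then c else 0)"
        using F' V0up by (simp add: F_def sum.distrib Pset_def)
      then show "(\<Sum>V\<in>{V\<in>upsets. x \<in> V}. F V) = \<phi> x" by (simp add: \<psi>_def)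
    qed
    then show ?thesis by blast
  qed
qed



definition ind :: "'a set \<Rightarrow> real^('a::finite)" where
  "ind V = (\<chi> x. if x \<in> V then 1 else 0)"

lemma comb_eq:
  fixes g :: "'a::{finite,lattice} set \<Rightarrow> real"
  shows "(\<Sum>V\<in>upsets. l V *\<^sub>R (ind V, g V)) =
     ((\<chi> x. \<Sum>V\<in>{V\<in>upsets. x \<in> V}. l V), (\<Sum>V\<in>upsets. l V * g V))"
proof (rule prod_eqI)
  show "fst (\<Sum>V\<in>upsets. l V *\<^sub>R (ind V, g V)) = fst ((\<chi> x. \<Sum>V\<in>{V\<in>upsets. x \<in> V}. l V), (\<Sum>V\<in>upsets. l V * g V))"
    unfolding fst_sum vec_eq_iff
  proof
    fix x
    have "(\<Sum>V\<in>upsets. fst (l V *\<^sub>R (ind V, g V))) $ x = (\<Sum>V\<in>upsets. if x \<in> V then l V else 0)"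
      by (simp add: ind_def if_distrib cong: if_cong)
    also have "\<dots> = (\<Sum>V\<in>{V\<in>upsets. x \<in> V}. l V)" by (simp add: sum.inter_filter)
    finally show "(\<Sum>V\<in>upsets. fst (l V *\<^sub>R (ind V, g V))) $ x =
      fst ((\<chi> x. \<Sum>V\<in>{V\<in>upsets. x \<in> V}. l V), (\<Sum>V\<in>upsets. l V * g V)) $ x" by simp
  qed
  show "snd (\<Sum>V\<in>upsets. l V *\<^sub>R (ind V, g V)) = snd ((\<chi> x. \<Sum>V\<in>{V\<in>upsets. x \<in> V}. l V), (\<Sum>V\<in>upsets. l V * g V))"
    unfolding snd_sum by simp
qed

lemma inner_ind: "inner w (ind V) = (\<Sum>x\<in>V. w $ x)"
  by (simp add: inner_vec_def ind_def if_distrib sum.inter_filter[symmetric] cong: if_cong)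

lemma inner_vec_fun: "inner w (\<chi> x. f x) = (\<Sum>x\<in>UNIV. w $ x * f x)"
  by (simp add: inner_vec_def)



lemma dual_lower:
  fixes g :: "'a::{finite,lattice} set \<Rightarrow> real"
  shows "\<exists>r. \<forall>V\<in>upsets. (\<Sum>x\<in>V. r x) \<le> g V"
proof -
  define M where "M = (\<Sum>V\<in>upsets. \<bar>g V\<bar>)"
  have "(\<Sum>x\<in>V. - M) \<le> g V" if V: "V \<in> upsets" for V
  proof -
    have M0: "0 \<le> M" unfolding M_def by (intro sum_nonneg) simp
    have "\<bar>g V\<bar> \<le> M" unfolding M_def using V by (intro member_le_sum) auto
    moreover have "1 \<le> card V" using upsets_ne[OF V] by (simp add: Suc_le_eq card_gt_0_iff)
    then have "M \<le> real (card V) * M" using M0 by (simp add: mult_le_cancel_right1)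
    ultimately show ?thesis by simp
  qed
  then show ?thesis by (intro exI[of _ "\<lambda>_. - M"]) blast
qed

lemma main_dual:
  fixes \<phi> :: "'a::{finite,lattice} \<Rightarrow> real" and g :: "'a set \<Rightarrow> real"
  assumes "\<phi> \<in> M1"
  shows "\<exists>c F r. F \<in> Pset \<phi> \<and> c = val g F \<and> (\<forall>G\<in>Pset \<phi>. c \<le> val g G)
     \<and> (\<forall>V\<in>upsets. (\<Sum>x\<in>V. r x) \<le> g V) \<and> c \<le> (\<Sum>x\<in>UNIV. r x * \<phi> x)"
proof -
  have ph1: "\<forall>x. 0 \<le> \<phi> x" and ph2: "\<forall>x y. x \<le> y \<longrightarrow> \<phi> x \<le> \<phi> y"
    using assms by (auto simp: M1_def)
  define phv where "phv = (\<chi> x. \<phi> x)"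
  define wV where "wV V = (ind V, g V)" for V
  define K where "K = convex_cone hull (wV ` upsets)"
  have K_eq: "K = {\<Sum>V\<in>upsets. l V *\<^sub>R wV V | l. \<forall>V\<in>upsets. 0 \<le> l V}"
    unfolding K_def by (rule cone_hull_finite) simp
  define T where "T = {t. (phv, t) \<in> K}"
  have T_eq: "T = val g ` Pset \<phi>"
  proof (intro equalityI subsetI)
    fix t assume "t \<in> T"
    then obtain l where l: "\<forall>V\<in>upsets. 0 \<le> l V" and e: "(phv, t) = (\<Sum>V\<in>upsets. l V *\<^sub>R wV V)"
      unfolding T_def K_eq by auto
    have e2: "(phv, t) = ((\<chi> x. \<Sum>V\<in>{V\<in>upsets. x \<in> V}. l V), (\<Sum>V\<in>upsets. l V * g V))"
      using e comb_eq[of l g] by (simp add: wV_def)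
    define F where "F V = (if V \<in> upsets then l V else 0)" for V
    have "F \<in> Pset \<phi>" unfolding Pset_def
    proof (intro CollectI conjI allI impI ballI)
      fix V :: "'a set" assume "V \<notin> upsets" then show "F V = 0" by (simp add: F_def)
    next
      fix V :: "'a set" assume "V \<in> upsets" then show "0 \<le> F V" using l by (simp add: F_def)
    next
      fix x
      have "(\<Sum>V\<in>{V\<in>upsets. x \<in> V}. F V) = (\<Sum>V\<in>{V\<in>upsets. x \<in> V}. l V)"
        by (rule sum.cong) (auto simp: F_def)
      also have "\<dots> = phv $ x" using e2 by (simp add: vec_eq_iff)
      finally show "(\<Sum>V\<in>{V\<in>upsets. x \<in> V}. F V) = \<phi> x" by (simp add: phv_def)
    qed
    moreover have "val g F = t"
    proof -
      have "val g F = (\<Sum>V\<in>upsets. l V * g V)" unfolding val_def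
        by (rule sum.cong) (auto simp: F_def)
      then show ?thesis using e2 by simp
    qed
    ultimately show "t \<in> val g ` Pset \<phi>" by (intro image_eqI[of _ _ F]) simp_all
  next
    fix t assume "t \<in> val g ` Pset \<phi>"
    then obtain F where F: "F \<in> Pset \<phi>" and t: "t = val g F" by auto
    have "(\<Sum>V\<in>upsets. F V *\<^sub>R wV V) = ((\<chi> x. \<Sum>V\<in>{V\<in>upsets. x \<in> V}. F V), (\<Sum>V\<in>upsets. F V * g V))"
      using comb_eq[of F g] by (simp add: wV_def)
    also have "\<dots> = (phv, t)" using F t by (simp add: phv_def val_def Pset_def)
    finally have "(phv, t) = (\<Sum>V\<in>upsets. F V *\<^sub>R wV V)" by simp
    moreover have "\<forall>V\<in>upsets. 0 \<le> F V" using F by (simp add: Pset_def)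
    ultimately have "(phv, t) \<in> K" unfolding K_eq by blast
    then show "t \<in> T" by (simp add: T_def)
  qed
  have Kclosed: "closed K" unfolding K_def by (rule closed_convex_cone_hull) simp
  have Tclosed: "closed T"
  proof -
    have "T = (\<lambda>t. (phv, t)) -` K" by (auto simp: T_def)
    moreover have "closed ((\<lambda>t. (phv, t)) -` K)"
      by (rule continuous_closed_vimage[OF Kclosed]) (intro continuous_intros)
    ultimately show ?thesis by simp
  qed
  obtain F0 where F0: "F0 \<in> Pset \<phi>" using feasible[OF ph1 ph2] by blast
  have Tne: "T \<noteq> {}" using F0 T_eq by auto
  obtain r0 where r0: "\<forall>V\<in>upsets. (\<Sum>x\<in>V. r0 x) \<le> g V" using dual_lower by blast
  have Tbdd: "bdd_below T"
  proof (rule bdd_belowI)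
    fix t assume "t \<in> T"
    then obtain F where "F \<in> Pset \<phi>" "t = val g F" using T_eq by auto
    then show "(\<Sum>x\<in>UNIV. r0 x * \<phi> x) \<le> t" using weak_duality r0 by simp
  qed
  define c where "c = Inf T"
  have cT: "c \<in> T" unfolding c_def using Tne Tbdd Tclosed by (rule closed_contains_Inf)
  have cmin: "\<forall>G\<in>Pset \<phi>. c \<le> val g G"
  proof
    fix G assume "G \<in> Pset \<phi>"
    then have "val g G \<in> T" using T_eq by simp
    then show "c \<le> val g G" unfolding c_def using Tbdd by (rule cInf_lower)
  qed
  obtain F where F: "F \<in> Pset \<phi>" "c = val g F" using cT T_eq by auto
  
  define I :: "'a set option set" where "I = insert None (Some ` upsets)"
  define v where "v i = (case i of None \<Rightarrow> (- phv, - c) | Some V \<Rightarrow> wV V)" for i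
  define K2 where "K2 = convex_cone hull (v ` I)"
  have finI: "finite I" by (simp add: I_def)
  have K2_eq: "K2 = {\<Sum>i\<in>I. l i *\<^sub>R v i | l. \<forall>i\<in>I. 0 \<le> l i}"
    unfolding K2_def by (rule cone_hull_finite[OF finI])
  have sumI: "(\<Sum>i\<in>I. l i *\<^sub>R v i) = l None *\<^sub>R (- phv, - c) + (\<Sum>V\<in>upsets. l (Some V) *\<^sub>R wV V)" for l
  proof -
    have "(\<Sum>i\<in>I. l i *\<^sub>R v i) = l None *\<^sub>R v None + (\<Sum>i\<in>Some ` upsets. l i *\<^sub>R v i)"
      unfolding I_def by (subst sum.insert) auto
    also have "(\<Sum>i\<in>Some ` upsets. l i *\<^sub>R v i) = (\<Sum>V\<in>upsets. l (Some V) *\<^sub>R wV V)"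
      by (subst sum.reindex) (auto simp: v_def)
    finally show ?thesis by (simp add: v_def)
  qed
  have znot: "(0, -1::real) \<notin> K2"
  proof
    assume "(0, -1::real) \<in> K2"
    then obtain l where l: "\<forall>i\<in>I. 0 \<le> l i" and e: "(0, -1::real) = (\<Sum>i\<in>I. l i *\<^sub>R v i)"
      unfolding K2_eq by auto
    define \<mu> where "\<mu> = l None"
    define lm where "lm V = l (Some V)" for V
    have mu0: "0 \<le> \<mu>" using l by (simp add: \<mu>_def I_def)
    have lam0: "\<forall>V\<in>upsets. 0 \<le> lm V" using l by (simp add: lm_def I_def)
    have e2: "(0, -1::real) = (\<mu> *\<^sub>R (- phv) + (\<chi> x. \<Sum>V\<in>{V\<in>upsets. x \<in> V}. lm V),
                 \<mu> * (- c) + (\<Sum>V\<in>upsets. lm V * g V))"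
      using e sumI[of l] comb_eq[of lm g] by (simp add: wV_def \<mu>_def lm_def)
    have ex: "(\<Sum>V\<in>{V\<in>upsets. x \<in> V}. lm V) = \<mu> * \<phi> x" for x
    proof -
      have "0 = (\<mu> *\<^sub>R (- phv) + (\<chi> x. \<Sum>V\<in>{V\<in>upsets. x \<in> V}. lm V)) $ x"
        using e2 by simp
      then show ?thesis by (simp add: phv_def)
    qed
    have eg: "\<mu> * (- c) + (\<Sum>V\<in>upsets. lm V * g V) = -1" using e2 by simp
    show False
    proof (cases "\<mu> = 0")
      case True
      have "lm V = 0" if V: "V \<in> upsets" for V
      proof -
        obtain x where x: "x \<in> V" using upsets_ne[OF V] by blast
        have "lm V \<le> (\<Sum>V\<in>{V\<in>upsets. x \<in> V}. lm V)"
          using V x lam0 by (intro member_le_sum) auto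
        then show ?thesis using ex[of x] True lam0 V by (simp add: order_antisym)
      qed
      then have "(\<Sum>V\<in>upsets. lm V * g V) = 0" by simp
      then show False using eg True by simp
    next
      case False
      then have mupos: "0 < \<mu>" using mu0 by simp
      define G where "G V = (if V \<in> upsets then lm V / \<mu> else 0)" for V
      have G: "G \<in> Pset \<phi>" unfolding Pset_def
      proof (intro CollectI conjI allI impI ballI)
        fix V :: "'a set" assume "V \<notin> upsets" then show "G V = 0" by (simp add: G_def)
      next
        fix V :: "'a set" assume "V \<in> upsets" then show "0 \<le> G V" using lam0 mu0 by (simp add: G_def)
      next
        fix x
        have "(\<Sum>V\<in>{V\<in>upsets. x \<in> V}. G V) = (\<Sum>V\<in>{V\<in>upsets. x \<in> V}. lm V / \<mu>)"
          by (rule sum.cong) (auto simp: G_def)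
        also have "\<dots> = (\<Sum>V\<in>{V\<in>upsets. x \<in> V}. lm V) / \<mu>" by (simp add: sum_divide_distrib)
        finally show "(\<Sum>V\<in>{V\<in>upsets. x \<in> V}. G V) = \<phi> x" using ex[of x] mupos by simp
      qed
      have "val g G = (\<Sum>V\<in>upsets. lm V * g V) / \<mu>"
      proof -
        have "val g G = (\<Sum>V\<in>upsets. (lm V * g V) / \<mu>)" unfolding val_def
          by (rule sum.cong) (auto simp: G_def)
        then show ?thesis by (simp add: sum_divide_distrib)
      qed
      also have "\<dots> = c - 1 / \<mu>" using eg mupos by (simp add: field_simps)
      finally have "val g G < c" using mupos by simp
      then show False using cmin G by fastforce
    qed
  qed
  have K2conv: "convex K2" unfolding K2_def by (rule convex_convex_cone_hull)
  have K2closed: "closed K2" unfolding K2_def by (rule closed_convex_cone_hull) (simp add: finI)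
  obtain a b where ab1: "inner a (0, -1::real) < b" and ab2: "\<forall>k\<in>K2. b < inner a k"
    using separating_hyperplane_closed_point[OF K2conv K2closed znot] by blast
  have b0: "b < 0" using ab2 convex_cone_hull_contains_0[of "v ` I"] by (auto simp: K2_def)
  have nonneg: "0 \<le> inner a k" if k: "k \<in> K2" for k
  proof (rule ccontr)
    assume "\<not> 0 \<le> inner a k"
    then have neg: "inner a k < 0" by simp
    define s where "s = b / inner a k"
    have "0 \<le> s" using neg b0 by (simp add: s_def divide_nonpos_neg less_imp_le)
    then have "s *\<^sub>R k \<in> K2" using k unfolding K2_def by (rule convex_cone_hull_mul[rotated])
    moreover have "inner a (s *\<^sub>R k) = b" using neg by (simp add: s_def)
    ultimately show False using ab2 by fastforce
  qed
  obtain w t where a: "a = (w, t)" by (cases a)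
  have tpos: "0 < t" using ab1 b0 by (simp add: a)
  define r where "r x = - (w $ x) / t" for x
  have vin: "v i \<in> K2" if "i \<in> I" for i
    unfolding K2_def using that by (intro hull_inc) simp
  have rV: "\<forall>V\<in>upsets. (\<Sum>x\<in>V. r x) \<le> g V"
  proof
    fix V :: "'a set" assume V: "V \<in> upsets"
    have "0 \<le> inner a (v (Some V))" using nonneg vin[of "Some V"] V by (simp add: I_def)
    then have "0 \<le> (\<Sum>x\<in>V. w $ x) + t * g V" by (simp add: a v_def wV_def inner_ind)
    moreover have "(\<Sum>x\<in>V. r x) = - (\<Sum>x\<in>V. w $ x) / t"
      by (simp add: r_def sum_divide_distrib sum_negf)
    then have "t * (\<Sum>x\<in>V. r x) = - (\<Sum>x\<in>V. w $ x)" using tpos by simp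
    ultimately have "t * (\<Sum>x\<in>V. r x) \<le> t * g V" by linarith
    then show "(\<Sum>x\<in>V. r x) \<le> g V" using tpos by (simp add: mult_le_cancel_left_pos)
  qed
  have rc: "c \<le> (\<Sum>x\<in>UNIV. r x * \<phi> x)"
  proof -
    have "0 \<le> inner a (v None)" using nonneg vin[of None] by (simp add: I_def)
    then have "0 \<le> - (\<Sum>x\<in>UNIV. w $ x * \<phi> x) - t * c"
      by (simp add: a v_def phv_def inner_vec_fun sum_negf)
    moreover have "(\<Sum>x\<in>UNIV. r x * \<phi> x) = - (\<Sum>x\<in>UNIV. w $ x * \<phi> x) / t"
      by (simp add: r_def sum_divide_distrib sum_negf)
    then have "t * (\<Sum>x\<in>UNIV. r x * \<phi> x) = - (\<Sum>x\<in>UNIV. w $ x * \<phi> x)" using tpos by simp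
    ultimately have "t * c \<le> t * (\<Sum>x\<in>UNIV. r x * \<phi> x)" by linarith
    then show ?thesis using tpos by (simp add: mult_le_cancel_left_pos)
  qed
  show ?thesis using F cmin rV rc by blast
qed


theorem theorem3p6:
  fixes \<phi> :: "'a::{finite,lattice} \<Rightarrow> real" and g :: "'a set \<Rightarrow> real"
  assumes "\<phi> \<in> M1"
  shows "\<exists>c. c \<in> B_values \<phi> g \<and> (\<forall>b\<in>B_values \<phi> g. c \<le> b)
            \<and> c \<in> S_values \<phi> g \<and> (\<forall>s\<in>S_values \<phi> g. s \<le> c)"
proof -
  obtain c F r where F: "F \<in> Pset \<phi>" and cF: "c = val g F" and cmin: "\<forall>G\<in>Pset \<phi>. c \<le> val g G"
     and rV: "\<forall>V\<in>upsets. (\<Sum>x\<in>V. r x) \<le> g V" and rc: "c \<le> (\<Sum>x\<in>UNIV. r x * \<phi> x)"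
    using main_dual[OF assms, of g] by blast
  have "(\<Sum>x\<in>UNIV. r x * \<phi> x) \<le> c" using weak_duality[OF F rV] cF by simp
  then have ceq: "c = (\<Sum>x\<in>UNIV. r x * \<phi> x)" using rc by linarith
  have "c \<in> B_values \<phi> g" unfolding B_char using F cF by simp
  moreover have "\<forall>b\<in>B_values \<phi> g. c \<le> b" unfolding B_char using cmin by simp
  moreover have "c \<in> S_values \<phi> g" unfolding S_values_def using ceq rV by blast
  moreover have "\<forall>s\<in>S_values \<phi> g. s \<le> c"
  proof
    fix s assume "s \<in> S_values \<phi> g"
    then obtain r' where "s = (\<Sum>x\<in>UNIV. r' x * \<phi> x)" "\<forall>V\<in>upsets. (\<Sum>x\<in>V. r' x) \<le> g V"
      unfolding S_values_def by blast
    then show "s \<le> c" using weak_duality[OF F] cF by simp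
  qed
  ultimately show ?thesis by blast
qed

end
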